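(* Let $\vec G$ be a directed graph whose underlying graph $G$ is bipartite (and simple), and let $M$ be a set of edges of $\vec G$ such that for every vertex $v$ of $\vec G$ there is at least one edge of $M$ directed into $v$. If $\vec G$ admits an $M$-complete $\{P_5,T_5\}$-decomposition, then $\vec G$ (and hence $G$) admits a decomposition into paths of length $5$.
   Context: A directed graph is a graph together with an orientation of its edges; edges are ordered pairs $(a,b)$ written $ab$ (directed from $a$ to $b$). Trails and paths in a directed graph are trails and paths of the underlying undirected graph (orientations ignored). $P_5$ is the path of length $5$ (five edges). $T_5$ is the unique bipartite trail of length $5$ that is not a path, i.e. a trail $v_0v_1v_2v_3v_4v_5$ with all of $v_0,\dots,v_4$ distinct and $v_5=v_1$. A $\{P_5,T_5\}$-decomposition of $\vec G$ is a partition of its edge set into edge sets of subgraphs each of which is a copy of $P_5$ or of $T_5$. Given such a decomposition $\mathcal D$, an edge $ab$ is inward in $\mathcal D$ if, for the element $T\in\mathcal D$ containing $ab$, $d_T(a)=1$. $\mathcal D$ is $M$-complete if every edge of $M$ is inward in $\mathcal D$. *)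

theory Defs
  imports Main
begin

definition simple_digraph :: "'a set \<Rightarrow> ('a \<times> 'a) set \<Rightarrow> bool" where
  "simple_digraph V D \<longleftrightarrow> finite V \<and> D \<subseteq> V \<times> V \<and>
     (\<forall>a b. (a, b) \<in> D \<longrightarrow> a \<noteq> b \<and> (b, a) \<notin> D)"

definition und :: "'a \<times> 'a \<Rightarrow> 'a set" where
  "und e = {fst e, snd e}"

definition bipartite_digraph :: "'a set \<Rightarrow> ('a \<times> 'a) set \<Rightarrow> bool" where
  "bipartite_digraph V D \<longleftrightarrow>
     (\<exists>A \<subseteq> V. \<forall>(a, b) \<in> D. (a \<in> A \<longleftrightarrow> b \<notin> A))"

text \<open>The set of arcs T forms a trail of length 5 along the vertex sequence vs = v0 ... v5
  (orientations ignored): its underlying edges are exactly the five edges v_i v_(i+1),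
  and these are pairwise distinct as arcs of T.\<close>
definition trail5_on :: "'a list \<Rightarrow> ('a \<times> 'a) set \<Rightarrow> bool" where
  "trail5_on vs T \<longleftrightarrow> length vs = 6 \<and> finite T \<and> card T = 5 \<and> inj_on und T \<and>
     und ` T = {{vs ! i, vs ! Suc i} | i. i < 5}"

definition is_P5 :: "('a \<times> 'a) set \<Rightarrow> bool" where
  "is_P5 T \<longleftrightarrow> (\<exists>vs. trail5_on vs T \<and> distinct vs)"

definition is_T5 :: "('a \<times> 'a) set \<Rightarrow> bool" where
  "is_T5 T \<longleftrightarrow> (\<exists>vs. trail5_on vs T \<and> distinct (take 5 vs) \<and> vs ! 5 = vs ! 1)"

definition is_decomposition :: "(('a \<times> 'a) set \<Rightarrow> bool) \<Rightarrow> ('a \<times> 'a) set \<Rightarrow> ('a \<times> 'a) set set \<Rightarrow> bool" where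
  "is_decomposition P D \<D> \<longleftrightarrow> \<Union>\<D> = D \<and> (\<forall>T \<in> \<D>. P T \<and> T \<noteq> {}) \<and>
     (\<forall>T \<in> \<D>. \<forall>T' \<in> \<D>. T \<noteq> T' \<longrightarrow> T \<inter> T' = {})"

definition P5T5_decomposition :: "('a \<times> 'a) set \<Rightarrow> ('a \<times> 'a) set set \<Rightarrow> bool" where
  "P5T5_decomposition D \<D> \<longleftrightarrow> is_decomposition (\<lambda>T. is_P5 T \<or> is_T5 T) D \<D>"

definition P5_decomposition :: "('a \<times> 'a) set \<Rightarrow> ('a \<times> 'a) set set \<Rightarrow> bool" where
  "P5_decomposition D \<D> \<longleftrightarrow> is_decomposition is_P5 D \<D>"

definition deg_in :: "('a \<times> 'a) set \<Rightarrow> 'a \<Rightarrow> nat" where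
  "deg_in T v = card {e \<in> T. fst e = v \<or> snd e = v}"

definition inward :: "('a \<times> 'a) set set \<Rightarrow> 'a \<times> 'a \<Rightarrow> bool" where
  "inward \<D> e \<longleftrightarrow> (\<forall>T \<in> \<D>. e \<in> T \<longrightarrow> deg_in T (fst e) = 1)"

definition M_complete :: "('a \<times> 'a) set \<Rightarrow> ('a \<times> 'a) set set \<Rightarrow> bool" where
  "M_complete M \<D> \<longleftrightarrow> (\<forall>e \<in> M. inward \<D> e)"

end

theory Submission imports Defs begin

lemma list6: "length vs = 6 \<Longrightarrow> \<exists>a b c d e f. vs = [a,b,c,d,e,f]"
  by (simp add: length_Suc_conv numeral_eq_Suc) blast

lemma trail5_iff: "trail5_on [a,b,c,d,e,f] T \<longleftrightarrow> finite T \<and> card T = 5 \<and> inj_on und T \<and>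
   und ` T = {{a,b},{b,c},{c,d},{d,e},{e,f}}"
proof -
  have s: "{..<5::nat} = {0,1,2,3,4}" by auto
  have "{g i | i. i < (5::nat)} = g ` {..<5}" for g :: "nat \<Rightarrow> 'a set" by blast
  then have "{{[a,b,c,d,e,f] ! i, [a,b,c,d,e,f] ! Suc i} | i. i < 5} = {{a,b},{b,c},{c,d},{d,e},{e,f}}"
    unfolding s by (simp add: numeral_eq_Suc)
  then show ?thesis unfolding trail5_on_def by simp
qed

lemma P5_list: "is_P5 T \<Longrightarrow> \<exists>a b c d e f. trail5_on [a,b,c,d,e,f] T \<and> distinct [a,b,c,d,e,f]"
proof -
  assume "is_P5 T"
  then obtain vs where v: "trail5_on vs T" "distinct vs" unfolding is_P5_def by blast
  have "length vs = 6" using v(1) unfolding trail5_on_def by blast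
  then obtain a b c d e f where vs: "vs = [a,b,c,d,e,f]" using list6 by blast
  show ?thesis using v unfolding vs by blast
qed

lemma T5_list: "is_T5 T \<Longrightarrow> \<exists>a b c d e. trail5_on [a,b,c,d,e,b] T \<and> distinct [a,b,c,d,e]"
proof -
  assume "is_T5 T"
  then obtain vs where v: "trail5_on vs T" "distinct (take 5 vs)" "vs ! 5 = vs ! 1"
    unfolding is_T5_def by blast
  have "length vs = 6" using v(1) unfolding trail5_on_def by blast
  then obtain a b c d e f where vs: "vs = [a,b,c,d,e,f]" using list6 by blast
  have "f = b" using v(3) vs by simp
  moreover have "distinct [a,b,c,d,e]" using v(2) vs by simp
  moreover have "trail5_on [a,b,c,d,e,f] T" using v(1) vs by simp
  ultimately show ?thesis by blast
qed

lemma und_pair[simp]: "und (a,b) = {a,b}" by (simp add: und_def)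

lemma deg_ne1:
  assumes "finite F" "inj_on und F" "X \<in> und ` F" "Y \<in> und ` F" "X \<noteq> Y" "v \<in> X" "v \<in> Y"
  shows "deg_in F v \<noteq> 1"
proof -
  obtain e1 where e1: "e1 \<in> F" "und e1 = X" using assms(3) by blast
  obtain e2 where e2: "e2 \<in> F" "und e2 = Y" using assms(4) by blast
  have ne: "e1 \<noteq> e2" using e1 e2 assms(5) by blast
  have sub: "{e1, e2} \<subseteq> {e \<in> F. fst e = v \<or> snd e = v}"
    using e1 e2 assms(6,7) by (auto simp: und_def)
  have "card {e1,e2} \<le> card {e \<in> F. fst e = v \<or> snd e = v}"
    by (rule card_mono) (use assms(1) sub in auto)
  then show ?thesis using ne unfolding deg_in_def by simp
qed

lemma deg_eq1:
  assumes "inj_on und F" "e0 \<in> F" "v \<in> und e0" "\<forall>X\<in>und ` F. v \<in> X \<longrightarrow> X = und e0"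
  shows "deg_in F v = 1"
proof -
  have "{e \<in> F. fst e = v \<or> snd e = v} = {e0}"
  proof (rule set_eqI, rule iffI)
    fix e assume "e \<in> {e \<in> F. fst e = v \<or> snd e = v}"
    then have "e \<in> F" "v \<in> und e" by (auto simp: und_def)
    then have "und e = und e0" using assms(4) by blast
    then show "e \<in> {e0}" using assms(1,2) \<open>e \<in> F\<close> by (auto dest: inj_onD)
  next
    fix e assume "e \<in> {e0}" then show "e \<in> {e \<in> F. fst e = v \<or> snd e = v}"
      using assms(2,3) by (auto simp: und_def)
  qed
  then show ?thesis unfolding deg_in_def by simp
qed

lemma und_diff: "inj_on und T \<Longrightarrow> e \<in> T \<Longrightarrow> und ` (T - {e}) = und ` T - {und e}"
  by (auto simp: inj_on_def)

lemma card_swap: "finite T \<Longrightarrow> e \<in> T \<Longrightarrow> x \<notin> T \<Longrightarrow> card (insert x (T - {e})) = card T"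
proof -
  assume a: "finite T" "e \<in> T" "x \<notin> T"
  then have "card T > 0" by (auto simp: card_gt_0_iff)
  then show ?thesis using a by (simp add: card_insert_if card_Diff_singleton)
qed

lemma deg_ne1':
  assumes "finite F" "inj_on und F" "{a,v} \<in> und ` F" "{v,b} \<in> und ` F" "a \<noteq> b"
  shows "deg_in F v \<noteq> 1"
  by (rule deg_ne1[OF assms(1,2,3,4)]) (use assms(5) in \<open>auto simp: doubleton_eq_iff\<close>)

lemma path_pos:
  assumes d1: "distinct [s,c,r,q,p,u]" and d2: "distinct [u2,z,a2,w,c,d2]"
    and eq: "{{s,c},{c,r},{r,q},{q,p},{p,u}} = {{u2,z},{z,a2},{a2,w},{w,c},{c,d2}}"
  shows "z = p"
proof -
  have "{w,c} \<in> {{s,c},{c,r},{r,q},{q,p},{p,u}}" unfolding eq by simp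
  then have w: "w = s \<or> w = r" using d1 d2 by (auto simp: doubleton_eq_iff)
  have "{a2,w} \<in> {{s,c},{c,r},{r,q},{q,p},{p,u}}" unfolding eq by simp
  then have w2: "w = r \<and> a2 = q" using w d1 d2 by (auto simp: doubleton_eq_iff)
  have "{z,a2} \<in> {{s,c},{c,r},{r,q},{q,p},{p,u}}" unfolding eq by simp
  then show "z = p" using w2 d1 d2 by (auto simp: doubleton_eq_iff)
qed
lemma mem5: "v \<in> X \<Longrightarrow> X \<in> {{a,b},{b,c},{c,d},{d,e},{e,f}} \<Longrightarrow> v = a \<or> v = b \<or> v = c \<or> v = d \<or> v = e \<or> v = f"
  by auto
lemma T5_of: "trail5_on [a,b,c,d,e,b] T \<Longrightarrow> distinct [a,b,c,d,e] \<Longrightarrow> is_T5 T"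
  unfolding is_T5_def by (rule exI[of _ "[a,b,c,d,e,b]"]) simp

lemma P5_of: "trail5_on [a,b,c,d,e,f] T \<Longrightarrow> distinct [a,b,c,d,e,f] \<Longrightarrow> is_P5 T"
  unfolding is_P5_def by blast

lemma reach_dec:
  assumes fin: "finite {y. (p,y) \<in> R\<^sup>*}"
    and h1: "\<forall>z w. (z,w) \<in> R' \<longrightarrow> z = p \<or> (z,w) \<in> R"
    and h2: "\<forall>z. (z,p) \<notin> R" and h3: "(p,b) \<in> R" and bp: "b \<noteq> p"
  shows "card {y. (b,y) \<in> R'\<^sup>*} < card {y. (p,y) \<in> R\<^sup>*}"
proof -
  have key: "(b,w) \<in> R\<^sup>* \<and> w \<noteq> p" if "(b,w) \<in> R'\<^sup>*" for w
    using that
  proof (induction rule: rtrancl_induct)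
    case base then show ?case using bp by simp
  next
    case (step y z)
    then have "(y,z) \<in> R" using h1 by blast
    then show ?case using step h2 by (meson rtrancl.rtrancl_into_rtrancl)
  qed
  have "{y. (b,y) \<in> R'\<^sup>*} \<subseteq> {y. (p,y) \<in> R\<^sup>*} - {p}"
  proof
    fix w assume "w \<in> {y. (b,y) \<in> R'\<^sup>*}"
    then have "(b,w) \<in> R\<^sup>*" "w \<noteq> p" using key by blast+
    then show "w \<in> {y. (p,y) \<in> R\<^sup>*} - {p}" using h3 by (simp add: converse_rtrancl_into_rtrancl)
  qed
  moreover have "p \<in> {y. (p,y) \<in> R\<^sup>*}" by simp
  ultimately have "{y. (b,y) \<in> R'\<^sup>*} \<subset> {y. (p,y) \<in> R\<^sup>*}" by blast
  then show ?thesis using fin by (rule psubset_card_mono[rotated])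
qed

locale ctx =
  fixes V :: "'a set" and D M :: "('a \<times> 'a) set" and A :: "'a set"
  assumes sd: "simple_digraph V D"
    and bipA: "\<forall>(a,b)\<in>D. (a \<in> A \<longleftrightarrow> b \<notin> A)"
    and MD: "M \<subseteq> D"
    and cover: "\<forall>v\<in>V. \<exists>u. (u,v) \<in> M"
begin

lemma finD: "finite D"
  using sd unfolding simple_digraph_def by (meson finite_SigmaI finite_subset)

lemma undinj: "inj_on und D"
proof (rule inj_onI)
  fix x y assume "x \<in> D" "y \<in> D" "und x = und y"
  then show "x = y" using sd unfolding simple_digraph_def und_def
    by (cases x; cases y) (auto simp: doubleton_eq_iff)
qed

lemma arcV: "(a,b) \<in> D \<Longrightarrow> a \<in> V \<and> b \<in> V"
  using sd unfolding simple_digraph_def by auto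

lemma arc_neq: "(a,b) \<in> D \<Longrightarrow> a \<noteq> b"
  using sd unfolding simple_digraph_def by auto

lemma side: "F \<subseteq> D \<Longrightarrow> {a,b} \<in> und ` F \<Longrightarrow> (a \<in> A \<longleftrightarrow> b \<notin> A)"
proof -
  assume "F \<subseteq> D" "{a,b} \<in> und ` F"
  then obtain x y where "(x,y) \<in> D" "{a,b} = {x,y}" by (auto simp: und_def)
  then show ?thesis using bipA by (auto simp: doubleton_eq_iff)
qed

lemma edgeV: "F \<subseteq> D \<Longrightarrow> {a,b} \<in> und ` F \<Longrightarrow> a \<in> V"
proof -
  assume "F \<subseteq> D" "{a,b} \<in> und ` F"
  then obtain x y where "(x,y) \<in> D" "{a,b} = {x,y}" by (auto simp: und_def)
  then show ?thesis using arcV by (auto simp: doubleton_eq_iff)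
qed

lemma arc_in: "F \<subseteq> D \<Longrightarrow> e \<in> D \<Longrightarrow> und e \<in> und ` F \<Longrightarrow> e \<in> F"
  using undinj by (auto dest: inj_onD)

definition good where "good \<D> \<longleftrightarrow> P5T5_decomposition D \<D> \<and> M_complete M \<D>"

lemma good_sub: "good \<D> \<Longrightarrow> F \<in> \<D> \<Longrightarrow> F \<subseteq> D"
  unfolding good_def P5T5_decomposition_def is_decomposition_def by blast

lemma good_same: "good \<D> \<Longrightarrow> F \<in> \<D> \<Longrightarrow> G \<in> \<D> \<Longrightarrow> X \<in> und ` F \<Longrightarrow> X \<in> und ` G \<Longrightarrow> F = G"
proof (rule ccontr)
  assume g: "good \<D>" "F \<in> \<D>" "G \<in> \<D>" "X \<in> und ` F" "X \<in> und ` G" "F \<noteq> G"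
  obtain e where e: "e \<in> F" "und e = X" using g by blast
  obtain e' where e': "e' \<in> G" "und e' = X" using g by blast
  have "e \<in> D" "e' \<in> D" using good_sub g e e' by blast+
  then have "e = e'" using e e' undinj by (auto dest: inj_onD)
  moreover have "F \<inter> G = {}" using g unfolding good_def P5T5_decomposition_def is_decomposition_def by blast
  ultimately show False using e e' by blast
qed

lemma good_inward: "good \<D> \<Longrightarrow> F \<in> \<D> \<Longrightarrow> e \<in> F \<Longrightarrow> e \<in> M \<Longrightarrow> deg_in F (fst e) = 1"
  unfolding good_def M_complete_def inward_def by blast

lemma good_shape: "good \<D> \<Longrightarrow> F \<in> \<D> \<Longrightarrow> is_P5 F \<or> is_T5 F"
  unfolding good_def P5T5_decomposition_def is_decomposition_def by blast

lemma good_fin: "good \<D> \<Longrightarrow> finite \<D>"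
proof -
  assume "good \<D>"
  then have "\<D> \<subseteq> Pow D" using good_sub[OF \<open>good \<D>\<close>] by blast
  moreover have "finite (Pow D)" using finD by simp
  ultimately show ?thesis by (rule finite_subset)
qed

lemma norm:
  assumes g: "good \<D>" and E: "E \<in> \<D>" and up: "(u,p) \<in> E" "(u,p) \<in> M"
  shows "(is_P5 E \<longrightarrow> (\<exists>a b x y. trail5_on [u,p,a,b,x,y] E \<and> distinct [u,p,a,b,x,y])) \<and>
         (\<not> is_P5 E \<longrightarrow> (\<exists>a b x. trail5_on [u,p,a,b,x,p] E \<and> distinct [u,p,a,b,x]))"
proof -
  have d1: "deg_in E u = 1" using good_inward[OF g E up] by simp
  have upu: "{u,p} \<in> und ` E" using up by force
  show ?thesis
  proof (intro conjI impI)
    assume "is_P5 E"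
    then obtain w0 w1 w2 w3 w4 w5 where t: "trail5_on [w0,w1,w2,w3,w4,w5] E"
      and d: "distinct [w0,w1,w2,w3,w4,w5]" using P5_list by blast
    note tt = t[unfolded trail5_iff]
    have n1: "deg_in E w1 \<noteq> 1" by (rule deg_ne1'[of E w0 w1 w2]) (use tt d in auto)
    have n2: "deg_in E w2 \<noteq> 1" by (rule deg_ne1'[of E w1 w2 w3]) (use tt d in auto)
    have n3: "deg_in E w3 \<noteq> 1" by (rule deg_ne1'[of E w2 w3 w4]) (use tt d in auto)
    have n4: "deg_in E w4 \<noteq> 1" by (rule deg_ne1'[of E w3 w4 w5]) (use tt d in auto)
    have ne: "u \<noteq> w1" "u \<noteq> w2" "u \<noteq> w3" "u \<noteq> w4" using n1 n2 n3 n4 d1 by auto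
    have "u = w0 \<and> p = w1 \<or> u = w5 \<and> p = w4"
      using upu tt ne d by (auto simp: doubleton_eq_iff)
    then show "\<exists>a b x y. trail5_on [u,p,a,b,x,y] E \<and> distinct [u,p,a,b,x,y]"
    proof
      assume "u = w0 \<and> p = w1" then show ?thesis using t d by blast
    next
      assume h: "u = w5 \<and> p = w4"
      have r: "{{w5,w4},{w4,w3},{w3,w2},{w2,w1},{w1,w0}} = {{w0,w1},{w1,w2},{w2,w3},{w3,w4},{w4,w5}}"
        by (simp add: insert_commute)
      have "trail5_on [w5,w4,w3,w2,w1,w0] E" unfolding trail5_iff r using tt by blast
      then show ?thesis using h d by (intro exI[of _ w3] exI[of _ w2] exI[of _ w1] exI[of _ w0]) auto
    qed
  next
    assume "\<not> is_P5 E"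
    then have "is_T5 E" using good_shape[OF g E] by blast
    then obtain w0 w1 w2 w3 w4 where t: "trail5_on [w0,w1,w2,w3,w4,w1] E"
      and d: "distinct [w0,w1,w2,w3,w4]" using T5_list by blast
    note tt = t[unfolded trail5_iff]
    have n1: "deg_in E w1 \<noteq> 1" by (rule deg_ne1'[of E w0 w1 w2]) (use tt d in auto)
    have n2: "deg_in E w2 \<noteq> 1" by (rule deg_ne1'[of E w1 w2 w3]) (use tt d in auto)
    have n3: "deg_in E w3 \<noteq> 1" by (rule deg_ne1'[of E w2 w3 w4]) (use tt d in auto)
    have n4: "deg_in E w4 \<noteq> 1" by (rule deg_ne1'[of E w3 w4 w1]) (use tt d in auto)
    have ne: "u \<noteq> w1" "u \<noteq> w2" "u \<noteq> w3" "u \<noteq> w4" using n1 n2 n3 n4 d1 by auto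
    have "u = w0 \<and> p = w1"
      using upu tt ne d by (auto simp: doubleton_eq_iff)
    then show "\<exists>a b x. trail5_on [u,p,a,b,x,p] E \<and> distinct [u,p,a,b,x]" using t d by blast
  qed
qed


definition arrow where
  "arrow \<D> c x y \<longleftrightarrow> (\<exists>F\<in>\<D>. \<exists>u a d. trail5_on [u,x,a,y,c,d] F \<and> distinct [u,x,a,y,c,d] \<and> (u,x) \<in> M \<and> (u,x) \<in> F)"

definition nT where "nT \<D> = card {F\<in>\<D>. \<not> is_P5 F}"

lemma swap:
  assumes g: "good \<D>" and T: "T \<in> \<D>" and nPT: "\<not> is_P5 T"
    and tT: "trail5_on [s,c,r,q,p,c] T" and dT: "distinct [s,c,r,q,p]"
    and uM: "(u,p) \<in> M"
  shows "\<exists>\<D>'. good \<D>' \<and> (nT \<D>' < nT \<D> \<or>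
     (\<exists>E E' y a b. nT \<D>' \<le> nT \<D> \<and> E \<in> \<D> \<and> E' \<in> \<D>' \<and> \<not> is_P5 E' \<and>
        trail5_on [y,c,p,a,b,c] E' \<and> distinct [y,c,p,a,b] \<and>
        trail5_on [u,p,a,b,c,y] E \<and> distinct [u,p,a,b,c,y] \<and> (u,p) \<in> E \<and>
        (\<forall>z w. arrow \<D>' c z w \<longrightarrow> z = p \<or> arrow \<D> c z w)))"
proof -
  note tt = tT[unfolded trail5_iff]
  have TD: "T \<subseteq> D" using good_sub[OF g T] .
  have upD: "(u,p) \<in> D" by (rule subsetD[OF MD uM])
  note un = tt[THEN conjunct2, THEN conjunct2, THEN conjunct2]
  note finT = tt[THEN conjunct1]
  note cT = tt[THEN conjunct2, THEN conjunct1]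
  note injT = tt[THEN conjunct2, THEN conjunct2, THEN conjunct1]
  have sd1: "s \<in> A \<longleftrightarrow> c \<notin> A" using side[OF TD, of s c] un by simp
  have sd2: "c \<in> A \<longleftrightarrow> r \<notin> A" using side[OF TD, of c r] un by simp
  have sd3: "r \<in> A \<longleftrightarrow> q \<notin> A" using side[OF TD, of r q] un by simp
  have sd4: "q \<in> A \<longleftrightarrow> p \<notin> A" using side[OF TD, of q p] un by simp
  have sdu: "u \<in> A \<longleftrightarrow> p \<notin> A" using bipA upD by auto
  have up: "u \<noteq> p" using arc_neq[OF upD] .
  have dq: "deg_in T q \<noteq> 1" by (rule deg_ne1'[of T r q p]) (use un finT injT dT in auto)
  have dc: "deg_in T c \<noteq> 1" by (rule deg_ne1'[of T s c r]) (use un finT injT dT in auto)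
  have dr: "deg_in T r \<noteq> 1" by (rule deg_ne1'[of T c r q]) (use un finT injT dT in auto)
  have dp: "deg_in T p \<noteq> 1" by (rule deg_ne1'[of T q p c]) (use un finT injT dT in auto)
  have upT: "(u,p) \<notin> T"
  proof
    assume "(u,p) \<in> T"
    then have "deg_in T u = 1" using good_inward[OF g T _ uM] by simp
    moreover have "{u,p} \<in> und ` T" using \<open>(u,p) \<in> T\<close> by force
    then have "u = q \<or> u = c" using un dT up by (auto simp: doubleton_eq_iff)
    ultimately show False using dq dc by auto
  qed
  have uq: "u \<noteq> q" and uc: "u \<noteq> c"
  proof -
    show "u \<noteq> q"
    proof
      assume "u = q"
      then have "und (u,p) \<in> und ` T" using un by (auto simp: insert_commute)
      then show False using arc_in[OF TD upD] upT by blast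
    qed
    show "u \<noteq> c"
    proof
      assume "u = c"
      then have "und (u,p) \<in> und ` T" using un by (auto simp: insert_commute)
      then show False using arc_in[OF TD upD] upT by blast
    qed
  qed
  have dT': "distinct [s,c,r,q,p,u]" using dT up uq uc sd1 sd2 sd3 sd4 sdu by auto
  have "(u,p) \<in> \<Union>\<D>" using upD g unfolding good_def P5T5_decomposition_def is_decomposition_def by blast
  then obtain E where E: "E \<in> \<D>" "(u,p) \<in> E" by blast
  have ET: "E \<noteq> T" using E upT by blast
  have disj: "\<And>F G. F \<in> \<D> \<Longrightarrow> G \<in> \<D> \<Longrightarrow> F \<noteq> G \<Longrightarrow> F \<inter> G = {}"
    using g unfolding good_def P5T5_decomposition_def is_decomposition_def by blast
  have TE: "T \<inter> E = {}" using disj[OF T E(1)] ET by blast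
  have ED: "E \<subseteq> D" using good_sub[OF g E(1)] .
  have "{p,c} \<in> und ` T" unfolding un by simp
  then obtain epc where epc: "epc \<in> T" "und epc = {p,c}" by (auto elim: imageE)
  have epcD: "epc \<in> D" using epc TD by blast
  have epcM: "epc \<notin> M"
  proof
    assume "epc \<in> M"
    then have d: "deg_in T (fst epc) = 1" using good_inward[OF g T epc(1)] by simp
    have f: "fst epc = p \<or> fst epc = c" using epc(2) unfolding und_def by (auto simp: doubleton_eq_iff)
    show False
    proof (cases "fst epc = p")
      case True then show ?thesis using d dp by simp
    next
      case False then have "fst epc = c" using f by simp
      then show ?thesis using d dc by simp
    qed
  qed
  have epc_ne: "epc \<noteq> (u,p)"
  proof
    assume "epc = (u,p)"
    then have "{u,p} = {p,c}" using epc(2) by simp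
    then show False using uc up by (simp add: doubleton_eq_iff)
  qed
  define T' where "T' = insert (u,p) (T - {epc})"
  define E' where "E' = insert epc (E - {(u,p)})"
  define \<D>' where "\<D>' = insert T' (insert E' (\<D> - {T,E}))"
  have T'D: "T' \<subseteq> D" using TD upD unfolding T'_def by blast
  have E'D: "E' \<subseteq> D" using ED epcD unfolding E'_def by blast
  have unT': "und ` T' = {{s,c},{c,r},{r,q},{q,p},{p,u}}"
  proof -
    have "und ` T' = insert {u,p} (und ` T - {{p,c}})"
      unfolding T'_def using und_diff[OF injT epc(1)] epc(2) by simp
    also have "\<dots> = {{s,c},{c,r},{r,q},{q,p},{p,u}}"
      unfolding un using dT' by (auto simp: doubleton_eq_iff)
    finally show ?thesis .
  qed
  have tT': "trail5_on [s,c,r,q,p,u] T'"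
    unfolding trail5_iff
  proof (intro conjI)
    show "finite T'" using finT unfolding T'_def by simp
    show "card T' = 5" unfolding T'_def using card_swap[OF finT epc(1) upT] cT by simp
    show "inj_on und T'" using undinj T'D inj_on_subset by blast
    show "und ` T' = {{s,c},{c,r},{r,q},{q,p},{p,u}}" by (rule unT')
  qed
  have PT': "is_P5 T'" unfolding is_P5_def using tT' dT' by blast
  have T'ne: "T' \<noteq> {}" unfolding T'_def by blast
  have E'ne: "E' \<noteq> {}" unfolding E'_def by blast
  have finD': "finite \<D>" using good_fin[OF g] .
  have injT': "inj_on und T'" using undinj T'D inj_on_subset by blast
  have sub1: "T' \<subseteq> T \<union> E" unfolding T'_def using E(2) by blast
  have sub2: "E' \<subseteq> T \<union> E" unfolding E'_def using epc(1) by blast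
  have TE'd: "T' \<inter> E' = {}" unfolding T'_def E'_def using TE epc_ne epc(1) E(2) by blast
  have restd: "\<And>F. F \<in> \<D> - {T,E} \<Longrightarrow> F \<inter> (T \<union> E) = {}" using disj T E(1) by blast
  have un2: "T' \<union> E' = T \<union> E" unfolding T'_def E'_def using epc(1) E(2) by blast
  have MT': "\<And>e. e \<in> T' \<Longrightarrow> e \<in> M \<Longrightarrow> deg_in T' (fst e) = 1"
  proof -
    fix e assume eT': "e \<in> T'" and eM: "e \<in> M"
    show "deg_in T' (fst e) = 1"
    proof (cases "e = (u,p)")
      case True
      have "\<forall>X\<in>{{s,c},{c,r},{r,q},{q,p},{p,u}}. u \<in> X \<longrightarrow> X = {u,p}"
        using dT' by (auto simp: insert_commute)
      then show ?thesis using True deg_eq1[OF injT', of "(u,p)" u] eT' unT' by simp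
    next
      case False
      then have eT: "e \<in> T" using eT' unfolding T'_def by blast
      have d: "deg_in T (fst e) = 1" using good_inward[OF g T eT eM] .
      have "fst e \<in> und e" unfolding und_def by simp
      moreover have "und e \<in> {{s,c},{c,r},{r,q},{q,p},{p,c}}" using imageI[OF eT, of und] un by simp
      ultimately have "fst e = s \<or> fst e = c \<or> fst e = r \<or> fst e = q \<or> fst e = p \<or> fst e = c"
        by (rule mem5)
      then have fs: "fst e = s" using d dc dr dq dp by auto
      have ue: "und e \<in> {{s,c},{c,r},{r,q},{q,p},{p,u}}" using imageI[OF eT', of und] unT' by simp
      have "s \<in> und e" using fs unfolding und_def by simp
      have all_s: "\<forall>X\<in>{{s,c},{c,r},{r,q},{q,p},{p,u}}. s \<in> X \<longrightarrow> X = {s,c}" using dT' by simp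
      have ue2: "und e = {s,c}" using all_s ue \<open>s \<in> und e\<close> by blast
      show ?thesis using deg_eq1[OF injT' eT', of s] fs unT' \<open>s \<in> und e\<close> all_s ue2 by simp
    qed
  qed
  have good': "good \<D>'" if h1: "is_P5 E' \<or> is_T5 E'" and h2: "\<And>e. e \<in> E' \<Longrightarrow> e \<in> M \<Longrightarrow> deg_in E' (fst e) = 1"
  proof -
    have U: "\<Union>\<D>' = D"
    proof -
      have "\<Union>\<D> = D" using g unfolding good_def P5T5_decomposition_def is_decomposition_def by blast
      moreover have "\<Union>\<D>' = T' \<union> E' \<union> \<Union>(\<D> - {T,E})" unfolding \<D>'_def by blast
      moreover have "\<Union>\<D> = T \<union> E \<union> \<Union>(\<D> - {T,E})" using T E(1) by blast
      ultimately show ?thesis using un2 by simp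
    qed
    have S: "\<forall>F\<in>\<D>'. (is_P5 F \<or> is_T5 F) \<and> F \<noteq> {}"
      using g h1 PT' T'ne E'ne unfolding \<D>'_def good_def P5T5_decomposition_def is_decomposition_def by blast
    have P: "\<forall>F\<in>\<D>'. \<forall>G\<in>\<D>'. F \<noteq> G \<longrightarrow> F \<inter> G = {}"
    proof (intro ballI impI)
      fix F G assume F: "F \<in> \<D>'" and G: "G \<in> \<D>'" and FG: "F \<noteq> G"
      show "F \<inter> G = {}"
      proof (cases "F \<in> \<D> - {T,E}")
        case Fr: True
        show ?thesis
        proof (cases "G \<in> \<D> - {T,E}")
          case True then show ?thesis using Fr FG disj by blast
        next
          case False then have "G = T' \<or> G = E'" using G unfolding \<D>'_def by blast
          then show ?thesis using restd[OF Fr] sub1 sub2 by blast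
        qed
      next
        case Fn: False
        then have Fc: "F = T' \<or> F = E'" using F unfolding \<D>'_def by blast
        show ?thesis
        proof (cases "G \<in> \<D> - {T,E}")
          case True then show ?thesis using Fc restd[OF True] sub1 sub2 by blast
        next
          case False then have "G = T' \<or> G = E'" using G unfolding \<D>'_def by blast
          then show ?thesis using Fc FG TE'd by blast
        qed
      qed
    qed
    have MC: "M_complete M \<D>'"
      unfolding M_complete_def inward_def
    proof (intro ballI impI)
      fix e F assume eM: "e \<in> M" and F: "F \<in> \<D>'" and eF: "e \<in> F"
      have "F = T' \<or> F = E' \<or> F \<in> \<D>" using F unfolding \<D>'_def by blast
      then show "deg_in F (fst e) = 1"
        using MT'[OF _ eM] h2[OF _ eM] good_inward[OF g _ eF eM] eF by blast
    qed
    show ?thesis unfolding good_def P5T5_decomposition_def is_decomposition_def using U S P MC by blast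
  qed
  define R where "R = {F \<in> \<D> - {T,E}. \<not> is_P5 F}"
  have finR: "finite R" unfolding R_def using finD' by simp
  have S'sub: "{F\<in>\<D>'. \<not> is_P5 F} \<subseteq> insert E' R" unfolding R_def \<D>'_def using PT' by blast
  have S'sub2: "is_P5 E' \<Longrightarrow> {F\<in>\<D>'. \<not> is_P5 F} \<subseteq> R" unfolding R_def \<D>'_def using PT' by blast
  have Ssup: "insert T R \<subseteq> {F\<in>\<D>. \<not> is_P5 F}" unfolding R_def using T nPT by blast
  have Ssup2: "\<not> is_P5 E \<Longrightarrow> insert T (insert E R) \<subseteq> {F\<in>\<D>. \<not> is_P5 F}" unfolding R_def using T nPT E(1) by blast
  have TR: "T \<notin> R" and ER: "E \<notin> R" unfolding R_def by blast+
  have finS: "finite {F\<in>\<D>. \<not> is_P5 F}" using finD' by simp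
  have cS: "card R + 1 \<le> nT \<D>"
    using card_mono[OF finS Ssup] finR TR unfolding nT_def by simp
  have cS': "nT \<D>' \<le> card R + 1"
  proof -
    have "nT \<D>' \<le> card (insert E' R)" unfolding nT_def by (rule card_mono) (use finR S'sub in auto)
    also have "\<dots> \<le> card R + 1" using finR by (simp add: card_insert_if)
    finally show ?thesis .
  qed
  have le: "nT \<D>' \<le> nT \<D>" using cS cS' by linarith
  have lt1: "nT \<D>' < nT \<D>" if "is_P5 E'"
  proof -
    have "nT \<D>' \<le> card R" unfolding nT_def by (rule card_mono) (use finR S'sub2[OF that] in auto)
    then show ?thesis using cS by linarith
  qed
  have lt2: "nT \<D>' < nT \<D>" if "\<not> is_P5 E"
  proof -
    have "card (insert T (insert E R)) \<le> nT \<D>" unfolding nT_def by (rule card_mono[OF finS Ssup2[OF that]])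
    moreover have "card (insert T (insert E R)) = card R + 2" using finR TR ER ET by simp
    ultimately show ?thesis using cS' by linarith
  qed
  have cpA: "c \<in> A \<longleftrightarrow> p \<notin> A" using sd2 sd3 sd4 by blast
  have unE'0: "und ` E' = insert {p,c} (und ` E - {{u,p}})"
    unfolding E'_def using und_diff[OF undinj[THEN inj_on_subset, OF ED] E(2)] epc(2) by simp
  have finE: "finite E" using ED finD finite_subset by blast
  have cE': "card E' = card E" unfolding E'_def using card_swap[OF finE E(2)] epc(1) TE by blast
  have injE': "inj_on und E'" using undinj E'D inj_on_subset by blast
  have finE': "finite E'" using finE unfolding E'_def by simp
  have nE: "(is_P5 E \<longrightarrow> (\<exists>a b x y. trail5_on [u,p,a,b,x,y] E \<and> distinct [u,p,a,b,x,y])) \<and>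
         (\<not> is_P5 E \<longrightarrow> (\<exists>a b x. trail5_on [u,p,a,b,x,p] E \<and> distinct [u,p,a,b,x]))"
    using norm[OF g E(1) E(2) uM] .
  have pcT: "{p,c} \<in> und ` T" unfolding un by simp
  show ?thesis
  proof (cases "is_P5 E")
    case False
    then obtain a b x where tE: "trail5_on [u,p,a,b,x,p] E" and dE: "distinct [u,p,a,b,x]" using nE by blast
    note te = tE[unfolded trail5_iff]
    note unE = te[THEN conjunct2, THEN conjunct2, THEN conjunct2]
    note injE = te[THEN conjunct2, THEN conjunct2, THEN conjunct1]
    note cE = te[THEN conjunct2, THEN conjunct1]
    have ca: "c \<noteq> a"
    proof
      assume "c = a" then have "{p,c} \<in> und ` E" unfolding unE by simp
      then show False using good_same[OF g T E(1) pcT] ET by simp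
    qed
    have cx: "c \<noteq> x"
    proof
      assume "c = x" then have "{p,c} \<in> und ` E" unfolding unE by (simp add: insert_commute)
      then show False using good_same[OF g T E(1) pcT] ET by simp
    qed
    have s1: "p \<in> A \<longleftrightarrow> a \<notin> A" using side[OF ED, of p a] unE by simp
    have s2: "a \<in> A \<longleftrightarrow> b \<notin> A" using side[OF ED, of a b] unE by simp
    have cb: "c \<noteq> b" using s1 s2 cpA by blast
    have unE': "und ` E' = {{c,p},{p,a},{a,b},{b,x},{x,p}}"
      unfolding unE'0 unE using dE by (auto simp: doubleton_eq_iff insert_commute)
    have tE': "trail5_on [c,p,a,b,x,p] E'" unfolding trail5_iff using finE' cE' cE injE' unE' by simp
    have dE': "distinct [c,p,a,b,x]" using dE ca cb cx cpA by auto
    have T5E': "is_T5 E'" by (rule T5_of[OF tE' dE'])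
    have ME': "deg_in E' (fst e) = 1" if eE': "e \<in> E'" and eM: "e \<in> M" for e
    proof -
      have "e \<noteq> epc" using eM epcM by blast
      then have eE: "e \<in> E" "e \<noteq> (u,p)" using eE' unfolding E'_def by blast+
      have d: "deg_in E (fst e) = 1" using good_inward[OF g E(1) eE(1) eM] .
      have "fst e \<in> und e" unfolding und_def by simp
      moreover have ue: "und e \<in> {{u,p},{p,a},{a,b},{b,x},{x,p}}" using imageI[OF eE(1), of und] unE by simp
      ultimately have m: "fst e = u \<or> fst e = p \<or> fst e = a \<or> fst e = b \<or> fst e = x \<or> fst e = p"
        by (rule mem5)
      have n1: "deg_in E p \<noteq> 1" by (rule deg_ne1'[of E u p a]) (use unE finE injE dE in auto)
      have n2: "deg_in E a \<noteq> 1" by (rule deg_ne1'[of E p a b]) (use unE finE injE dE in auto)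
      have n3: "deg_in E b \<noteq> 1" by (rule deg_ne1'[of E a b x]) (use unE finE injE dE in auto)
      have n4: "deg_in E x \<noteq> 1" by (rule deg_ne1'[of E b x p]) (use unE finE injE dE in auto)
      have "fst e = u" using m d n1 n2 n3 n4 by auto
      then have "u \<in> und e" unfolding und_def by simp
      have all_u: "\<forall>X\<in>{{u,p},{p,a},{a,b},{b,x},{x,p}}. u \<in> X \<longrightarrow> X = {u,p}" using dE by simp
      have "und e = {u,p}" using all_u ue \<open>u \<in> und e\<close> by blast
      then have "und e = und (u,p)" by simp
      then have "e = (u,p)" by (rule inj_onD[OF injE _ eE(1) E(2)])
      then show ?thesis using eE(2) by blast
    qed
    have "good \<D>'" by (rule good') (use T5E' ME' in auto)
    then show ?thesis using lt2[OF False] by blast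
  next
    case True
    then obtain a b x y where tE: "trail5_on [u,p,a,b,x,y] E" and dE: "distinct [u,p,a,b,x,y]" using nE by blast
    note te = tE[unfolded trail5_iff]
    note unE = te[THEN conjunct2, THEN conjunct2, THEN conjunct2]
    note injE = te[THEN conjunct2, THEN conjunct2, THEN conjunct1]
    note cE = te[THEN conjunct2, THEN conjunct1]
    have ca: "c \<noteq> a"
    proof
      assume "c = a" then have "{p,c} \<in> und ` E" unfolding unE by simp
      then show False using good_same[OF g T E(1) pcT] ET by simp
    qed
    have s1: "p \<in> A \<longleftrightarrow> a \<notin> A" using side[OF ED, of p a] unE by simp
    have s2: "a \<in> A \<longleftrightarrow> b \<notin> A" using side[OF ED, of a b] unE by simp
    have s3: "b \<in> A \<longleftrightarrow> x \<notin> A" using side[OF ED, of b x] unE by simp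
    have s4: "x \<in> A \<longleftrightarrow> y \<notin> A" using side[OF ED, of x y] unE by simp
    have cb: "c \<noteq> b" using s1 s2 cpA by blast
    have cy: "c \<noteq> y" using s1 s2 s3 s4 cpA by blast
    have unE': "und ` E' = {{c,p},{p,a},{a,b},{b,x},{x,y}}"
      unfolding unE'0 unE using dE by (auto simp: doubleton_eq_iff insert_commute)
    have tE': "trail5_on [c,p,a,b,x,y] E'" unfolding trail5_iff using finE' cE' cE injE' unE' by simp
    have ME': "deg_in E' (fst e) = 1" if eE': "e \<in> E'" and eM: "e \<in> M" for e
    proof -
      have "e \<noteq> epc" using eM epcM by blast
      then have eE: "e \<in> E" "e \<noteq> (u,p)" using eE' unfolding E'_def by blast+
      have d: "deg_in E (fst e) = 1" using good_inward[OF g E(1) eE(1) eM] .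
      have "fst e \<in> und e" unfolding und_def by simp
      moreover have ue: "und e \<in> {{u,p},{p,a},{a,b},{b,x},{x,y}}" using imageI[OF eE(1), of und] unE by simp
      ultimately have m: "fst e = u \<or> fst e = p \<or> fst e = a \<or> fst e = b \<or> fst e = x \<or> fst e = y"
        by (rule mem5)
      have n1: "deg_in E p \<noteq> 1" by (rule deg_ne1'[of E u p a]) (use unE finE injE dE in auto)
      have n2: "deg_in E a \<noteq> 1" by (rule deg_ne1'[of E p a b]) (use unE finE injE dE in auto)
      have n3: "deg_in E b \<noteq> 1" by (rule deg_ne1'[of E a b x]) (use unE finE injE dE in auto)
      have n4: "deg_in E x \<noteq> 1" by (rule deg_ne1'[of E b x y]) (use unE finE injE dE in auto)
      have m2: "fst e = u \<or> fst e = y" using m d n1 n2 n3 n4 by auto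
      have nu: "fst e \<noteq> u"
      proof
        assume "fst e = u"
        then have "u \<in> und e" unfolding und_def by simp
        have all_u: "\<forall>X\<in>{{u,p},{p,a},{a,b},{b,x},{x,y}}. u \<in> X \<longrightarrow> X = {u,p}" using dE by simp
        have "und e = {u,p}" using all_u ue \<open>u \<in> und e\<close> by blast
        then have "und e = und (u,p)" by simp
        then have "e = (u,p)" by (rule inj_onD[OF injE _ eE(1) E(2)])
        then show False using eE(2) by blast
      qed
      then have fy: "fst e = y" using m2 by blast
      have yin: "y \<in> und e" using fy unfolding und_def by simp
      have ue': "und e \<in> {{c,p},{p,a},{a,b},{b,x},{x,y}}" using imageI[OF eE', of und] unE' by simp
      have all_y: "\<forall>X\<in>{{c,p},{p,a},{a,b},{b,x},{x,y}}. y \<in> X \<longrightarrow> X = {x,y}"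
        using dE cy by auto
      have uy: "und e = {x,y}" using all_y ue' yin by blast
      show ?thesis using deg_eq1[OF injE' eE', of y] fy unE' yin all_y uy by simp
    qed
    show ?thesis
    proof (cases "is_P5 E'")
      case True
      have "good \<D>'" by (rule good') (use True ME' in auto)
      then show ?thesis using lt1[OF True] by blast
    next
      case nP: False
      have xc: "x = c"
      proof (rule ccontr)
        assume "x \<noteq> c"
        then have "distinct [c,p,a,b,x,y]" using dE ca cb cy cpA by auto
        then show False using nP P5_of[OF tE'] by blast
      qed
      have tE'2: "trail5_on [y,c,p,a,b,c] E'"
      proof -
        have "{{y,c},{c,p},{p,a},{a,b},{b,c}} = {{c,p},{p,a},{a,b},{b,c},{c,y}}" by (simp add: insert_commute)
        then show ?thesis using tE' xc unfolding trail5_iff by (simp add: insert_commute)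
      qed
      have dE'2: "distinct [y,c,p,a,b]" using dE xc ca cb cy cpA by auto
      have gd: "good \<D>'" by (rule good') (use T5_of[OF tE'2 dE'2] ME' in auto)
      have tE2: "trail5_on [u,p,a,b,c,y] E" using tE xc by simp
      have dE2: "distinct [u,p,a,b,c,y]" using dE xc by simp
      have E'in: "E' \<in> \<D>'" unfolding \<D>'_def by blast
      have arr: "\<forall>z w. arrow \<D>' c z w \<longrightarrow> z = p \<or> arrow \<D> c z w"
      proof (intro allI impI)
        fix z w assume "arrow \<D>' c z w"
        then obtain F u2 a2 d2 where F: "F \<in> \<D>'" and tF: "trail5_on [u2,z,a2,w,c,d2] F"
          and dF: "distinct [u2,z,a2,w,c,d2]" and mF: "(u2,z) \<in> M" "(u2,z) \<in> F"
          unfolding arrow_def by blast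
        have "F = T' \<or> F = E' \<or> F \<in> \<D>" using F unfolding \<D>'_def by blast
        moreover have "F \<noteq> E'" using P5_of[OF tF dF] nP by blast
        moreover have "F = T' \<Longrightarrow> z = p"
        proof -
          assume FT: "F = T'"
          note tf = tF[unfolded trail5_iff, THEN conjunct2, THEN conjunct2, THEN conjunct2]
          have "und ` T' = {{u2,z},{z,a2},{a2,w},{w,c},{c,d2}}" using tf unfolding FT .
          then have "{{s,c},{c,r},{r,q},{q,p},{p,u}} = {{u2,z},{z,a2},{a2,w},{w,c},{c,d2}}"
            using unT' by simp
          then show "z = p" by (rule path_pos[OF dT' dF])
        qed
        moreover have "F \<in> \<D> \<Longrightarrow> arrow \<D> c z w" unfolding arrow_def using tF dF mF by blast
        ultimately show "z = p \<or> arrow \<D> c z w" by blast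
      qed
      have X: "\<exists>E E' y a b. nT \<D>' \<le> nT \<D> \<and> E \<in> \<D> \<and> E' \<in> \<D>' \<and> \<not> is_P5 E' \<and>
        trail5_on [y,c,p,a,b,c] E' \<and> distinct [y,c,p,a,b] \<and>
        trail5_on [u,p,a,b,c,y] E \<and> distinct [u,p,a,b,c,y] \<and> (u,p) \<in> E \<and>
        (\<forall>z w. arrow \<D>' c z w \<longrightarrow> z = p \<or> arrow \<D> c z w)"
        apply (rule exI[of _ E], rule exI[of _ E'], rule exI[of _ y], rule exI[of _ a], rule exI[of _ b])
        using le E(1) E'in nP tE'2 dE'2 tE2 dE2 E(2) arr by (intro conjI)
      show ?thesis apply (rule exI[of _ \<D>']) using gd X by (intro conjI disjI2)
    qed
  qed
qed



definition reach where "reach \<D> c x = {y. (x,y) \<in> {(a,b). arrow \<D> c a b}\<^sup>*}"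

lemma reach_fin:
  assumes g: "good \<D>" shows "finite (reach \<D> c x)"
proof -
  have "reach \<D> c x \<subseteq> insert x V"
  proof
    fix y assume "y \<in> reach \<D> c x"
    then have "(x,y) \<in> {(a,b). arrow \<D> c a b}\<^sup>*" unfolding reach_def by simp
    then show "y \<in> insert x V"
    proof (cases rule: rtranclE)
      case base then show ?thesis by simp
    next
      case (step z)
      then have "arrow \<D> c z y" by simp
      then obtain F u a d where F: "F \<in> \<D>" "trail5_on [u,z,a,y,c,d] F" unfolding arrow_def by blast
      have "{y,c} \<in> und ` F" using F(2) unfolding trail5_iff by simp
      then have "y \<in> V" using edgeV[OF good_sub[OF g F(1)]] by blast
      then show ?thesis by simp
    qed
  qed
  moreover have "finite V" using sd[unfolded simple_digraph_def, THEN conjunct1] .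
  then have "finite (insert x V)" by simp
  ultimately show ?thesis by (rule finite_subset)
qed

lemma reduce:
  assumes "good \<D>" "T \<in> \<D>" "\<not> is_P5 T" "trail5_on [s,c,r,q,p,c] T" "distinct [s,c,r,q,p]"
  shows "\<exists>\<D>'. good \<D>' \<and> nT \<D>' < nT \<D>"
  using assms
proof (induction "card (reach \<D> c p)" arbitrary: \<D> T s r q p rule: less_induct)
  case less
  note g = less.prems(1) and T = less.prems(2) and nP = less.prems(3) and tT = less.prems(4) and dT = less.prems(5)
  note unT = tT[unfolded trail5_iff, THEN conjunct2, THEN conjunct2, THEN conjunct2]
  have pcT: "{p,c} \<in> und ` T" unfolding unT by simp
  have "p \<in> V" using edgeV[OF good_sub[OF g T] pcT] .
  then obtain u where uM: "(u,p) \<in> M" using cover by blast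
  from swap[OF g T nP tT dT uM] obtain \<D>' where g': "good \<D>'" and alt: "nT \<D>' < nT \<D> \<or>
     (\<exists>E E' y a b. nT \<D>' \<le> nT \<D> \<and> E \<in> \<D> \<and> E' \<in> \<D>' \<and> \<not> is_P5 E' \<and>
        trail5_on [y,c,p,a,b,c] E' \<and> distinct [y,c,p,a,b] \<and>
        trail5_on [u,p,a,b,c,y] E \<and> distinct [u,p,a,b,c,y] \<and> (u,p) \<in> E \<and>
        (\<forall>z w. arrow \<D>' c z w \<longrightarrow> z = p \<or> arrow \<D> c z w))" by blast
  show ?case
  proof (cases "nT \<D>' < nT \<D>")
    case True then show ?thesis using g' by blast
  next
    case False
    then obtain E E' y a b where le: "nT \<D>' \<le> nT \<D>" and E: "E \<in> \<D>" and E': "E' \<in> \<D>'" and nE': "\<not> is_P5 E'"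
      and tE': "trail5_on [y,c,p,a,b,c] E'" and dE': "distinct [y,c,p,a,b]"
      and tE: "trail5_on [u,p,a,b,c,y] E" and dE: "distinct [u,p,a,b,c,y]" and upE: "(u,p) \<in> E"
      and arr: "\<forall>z w. arrow \<D>' c z w \<longrightarrow> z = p \<or> arrow \<D> c z w" using alt by blast
    have h2: "\<forall>z. \<not> arrow \<D> c z p"
    proof (intro allI notI)
      fix z assume "arrow \<D> c z p"
      then obtain F u2 a2 d2 where F: "F \<in> \<D>" and tF: "trail5_on [u2,z,a2,p,c,d2] F"
        and dF: "distinct [u2,z,a2,p,c,d2]" unfolding arrow_def by blast
      have "{p,c} \<in> und ` F" using tF unfolding trail5_iff by simp
      then have "F = T" using good_same[OF g F T _ pcT] by blast
      then show False using P5_of[OF tF dF] nP by blast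
    qed
    have h3: "arrow \<D> c p b" unfolding arrow_def using E tE dE uM upE by blast
    have lt: "card (reach \<D>' c b) < card (reach \<D> c p)"
      unfolding reach_def
      by (rule reach_dec) (use reach_fin[OF g, of c p] arr h2 h3 dE' in \<open>auto simp: reach_def\<close>)
    from less.hyps[OF lt g' E' nE' tE' dE'] obtain \<D>'' where "good \<D>''" "nT \<D>'' < nT \<D>'" by blast
    then show ?thesis using le by (meson order_less_le_trans)
  qed
qed

lemma all_P5: "good \<D> \<Longrightarrow> \<exists>\<D>'. P5_decomposition D \<D>'"
proof (induction "nT \<D>" arbitrary: \<D> rule: less_induct)
  case less
  show ?case
  proof (cases "\<exists>T\<in>\<D>. \<not> is_P5 T")
    case False
    have d: "is_decomposition (\<lambda>T. is_P5 T \<or> is_T5 T) D \<D>"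
      using less.prems unfolding good_def P5T5_decomposition_def by simp
    have d1: "\<Union>\<D> = D" using d unfolding is_decomposition_def by (elim conjE)
    have d2: "\<forall>T\<in>\<D>. T \<noteq> {}" using d unfolding is_decomposition_def by blast
    have d3: "\<forall>T \<in> \<D>. \<forall>T' \<in> \<D>. T \<noteq> T' \<longrightarrow> T \<inter> T' = {}"
      using d unfolding is_decomposition_def by (elim conjE)
    have "P5_decomposition D \<D>" unfolding P5_decomposition_def is_decomposition_def
      using d1 d2 d3 False by blast
    then show ?thesis by blast
  next
    case True
    then obtain T where T: "T \<in> \<D>" "\<not> is_P5 T" by blast
    then have "is_T5 T" using good_shape[OF less.prems] by blast
    then obtain s c r q p where "trail5_on [s,c,r,q,p,c] T" "distinct [s,c,r,q,p]" using T5_list by blast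
    from reduce[OF less.prems T this] obtain \<D>' where "good \<D>'" "nT \<D>' < nT \<D>" by blast
    then show ?thesis using less.hyps by blast
  qed
qed

end

theorem mainTheorem6:
  fixes V :: "'a set" and D M :: "('a \<times> 'a) set"
  assumes "simple_digraph V D"
    and "bipartite_digraph V D"
    and "M \<subseteq> D"
    and "\<forall>v \<in> V. \<exists>u. (u, v) \<in> M"
    and "\<exists>\<D>. P5T5_decomposition D \<D> \<and> M_complete M \<D>"
  shows "\<exists>\<D>. P5_decomposition D \<D>"
proof -
  obtain A where A: "\<forall>(a, b) \<in> D. (a \<in> A \<longleftrightarrow> b \<notin> A)"
    using assms(2) unfolding bipartite_digraph_def by blast
  interpret ctx V D M A using assms(1,3,4) A by unfold_locales
  obtain \<D> where "P5T5_decomposition D \<D> \<and> M_complete M \<D>" using assms(5) by blast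
  then have "good \<D>" unfolding good_def by blast
  then show ?thesis by (rule all_P5)
qed

end
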